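(* Let a countable group $G$ act continuously on a Polish space $X$, let $\Phi=(\ell,\phi,\mathcal{Z},\Gamma,\mathcal{H})$ be a chart for $G$, and let $E$ be an equivalence relation on $X$. If $X^{\mathcal{H}}$ is clopen and $E$ is $G$-clopen, then $\partial_i^\Phi(E,A)$ is clopen for every centered rectangle $A\subseteq\mathrm{dom}(\phi)$ and every $1\le i\le\ell$.
   Context: Rectangles: Let $\Gamma$ be a finite additive abelian group with identity $0_\Gamma$ and $\ell\in\mathbb{N}$. Elements of $\mathbb{Z}^\ell\times\Gamma$ have integer coordinates $v_1,\dots,v_\ell$ and $v_{\ell+1}\in\Gamma$; $\mathbf{0}$ has first $\ell$ coordinates $0$ and last coordinate $0_\Gamma$; $e_i$ has $i$-th coordinate $1$, other integer coordinates $0$, last coordinate $0_\Gamma$; for $\lambda$ real, $\lambda\cdot v$ scales the first $\ell$ coordinates. $\mathrm{Rec}(a)=\{b\in\mathbb{Z}^\ell\times\Gamma: -|a_i|\le b_i\le|a_i|,\ 1\le i\le\ell\}$. A rectangle is $c+\mathrm{Rec}(a)$, $c,a\in\mathbb{Z}^\ell\times\Gamma$; uniquely written with center $c\in\mathbb{Z}^\ell\times\{0_\Gamma\}$ and radius vector $\mathrm{L}(A)=a\in\mathbb{N}^\ell\times\{0_\Gamma\}$, entries $\mathrm{L}_i(A)$. Centered means center $\mathbf{0}$. $A^i=c+\mathrm{Rec}(\mathrm{L}(A)-\mathrm{L}_i(A)\cdot e_i)$ where $c$ is the center of $A$. Sums are elementwise. $\lambda\cdot A=c+\mathrm{Rec}(\lambda\cdot\mathrm{L}(A))$.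 Charts: a chart for $G$ is $\Phi=(\ell,\phi,\mathcal{Z},\Gamma,\mathcal{H})$ with $\mathcal{H}$ a finite collection of pairwise conjugate subgroups of $G$, $\Gamma$ finite abelian, $\mathcal{Z}$ a centered rectangle with all $\mathrm{L}_i(\mathcal{Z})>0$, $\phi$ an injective map into $G$ with $\mathrm{dom}(\phi)$ a centered rectangle containing $3\cdot\mathcal{Z}$, $\phi(\mathbf{0})=1_G$, and for all $r,s\in\mathrm{dom}(\phi)$, $H\in\mathcal{H}$: $\phi(r)H=\phi(s)H\Rightarrow r=s$; $r+s+\mathcal{Z}\subseteq\mathrm{dom}(\phi)\Rightarrow\exists z\in\mathcal{Z}:\phi(r)\phi(s)H=\phi(r+s+z)H$; $r-s+\mathcal{Z}\subseteq\mathrm{dom}(\phi)\Rightarrow\exists z:\phi(r)\phi(s)^{-1}H=\phi(r-s+z)H$; $-r+s+\mathcal{Z}\subseteq\mathrm{dom}(\phi)\Rightarrow\exists z:\phi(r)^{-1}\phi(s)H=\phi(-r+s+z)H$; $-s+\mathcal{Z}\subseteq\mathrm{dom}(\phi)\Rightarrow\exists z:\phi(s)^{-1}H=\phi(-s+z)H$. $\phi(S)\cdot x=\{\phi(s)\cdot x: s\in S\}$; $X^{\mathcal{H}}=\{x\in X:\mathrm{Stab}(x)\in\mathcal{H}\}$. Boundary: for $E$ an equivalence relation on $X$, $A\subseteq\mathrm{dom}(\phi)$ centered and $1\le i\le\ell$, $\partial_i^\Phi(E,A)$ is the set of $x\in X^{\mathcal{H}}$ with $[\phi(A^i-\mathrm{L}_i(A)\cdot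 e_i)\cdot x]_E\cap[\phi(A^i+\mathrm{L}_i(A)\cdot e_i)\cdot x]_E=\varnothing$, where $[Y]_E$ is the $E$-saturation of $Y$. $G$-clopen: a relation $R\subseteq X\times X$ is $G$-clopen if for each $g\in G$ the set $\{x:(x,g\cdot x)\in R\}$ is clopen. *)

theory Defs
  imports "HOL-Analysis.Analysis" "HOL-Algebra.Group" "HOL-Algebra.Coset"
begin

(* Elements of Z^l x Gamma: integer coordinates 1..l (all other coordinates 0)
   and a last coordinate in the finite abelian group Gamma (a type 'c). *)
type_synonym 'c zvec = "(nat \<Rightarrow> int) \<times> 'c"

definition Zsp :: "nat \<Rightarrow> ('c::ab_group_add) zvec set" where
  "Zsp l = {v. \<forall>i. (i < 1 \<or> l < i) \<longrightarrow> fst v i = 0}"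

definition vzero :: "('c::ab_group_add) zvec" where
  "vzero = ((\<lambda>_. 0), 0)"

definition vadd :: "('c::ab_group_add) zvec \<Rightarrow> 'c zvec \<Rightarrow> 'c zvec" where
  "vadd v w = ((\<lambda>i. fst v i + fst w i), snd v + snd w)"

definition vneg :: "('c::ab_group_add) zvec \<Rightarrow> 'c zvec" where
  "vneg v = ((\<lambda>i. - fst v i), - snd v)"

definition unitv :: "nat \<Rightarrow> ('c::ab_group_add) zvec" where
  "unitv i = ((\<lambda>j. if j = i then 1 else 0), 0)"

definition vscale :: "int \<Rightarrow> ('c::ab_group_add) zvec \<Rightarrow> 'c zvec" where
  "vscale k v = ((\<lambda>i. k * fst v i), snd v)"

definition Rec :: "nat \<Rightarrow> ('c::ab_group_add) zvec \<Rightarrow> 'c zvec set" where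
  "Rec l a = {b \<in> Zsp l. \<forall>i\<in>{1..l}. - \<bar>fst a i\<bar> \<le> fst b i \<and> fst b i \<le> \<bar>fst a i\<bar>}"

definition vtrans :: "('c::ab_group_add) zvec \<Rightarrow> 'c zvec set \<Rightarrow> 'c zvec set" where
  "vtrans c S = vadd c ` S"

(* A is a centered rectangle with radius vector L(A) = a
   (a in N^l x {0_Gamma}, center 0); this is the unique such writing. *)
definition centered_rect :: "nat \<Rightarrow> ('c::ab_group_add) zvec \<Rightarrow> 'c zvec set \<Rightarrow> bool" where
  "centered_rect l a A \<longleftrightarrow> a \<in> Zsp l \<and> snd a = 0 \<and> (\<forall>i. 0 \<le> fst a i) \<and> A = Rec l a"

definition rect_face :: "nat \<Rightarrow> ('c::ab_group_add) zvec \<Rightarrow> nat \<Rightarrow> 'c zvec set" where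
  "rect_face l a i = Rec l (vadd a (vneg (vscale (fst a i) (unitv i))))"

definition Stab :: "('g, 'm) monoid_scheme \<Rightarrow> ('g \<Rightarrow> 'x \<Rightarrow> 'x) \<Rightarrow> 'x \<Rightarrow> 'g set" where
  "Stab G act x = {g \<in> carrier G. act g x = x}"

definition XH :: "('g, 'm) monoid_scheme \<Rightarrow> ('g \<Rightarrow> 'x \<Rightarrow> 'x) \<Rightarrow> 'g set set \<Rightarrow> 'x set" where
  "XH G act \<H> = {x. Stab G act x \<in> \<H>}"

definition continuous_action :: "('g, 'm) monoid_scheme \<Rightarrow> ('g \<Rightarrow> 'x::topological_space \<Rightarrow> 'x) \<Rightarrow> bool" where
  "continuous_action G act \<longleftrightarrow> group G
     \<and> (\<forall>x. act \<one>\<^bsub>G\<^esub> x = x)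
     \<and> (\<forall>g\<in>carrier G. \<forall>h\<in>carrier G. \<forall>x. act (g \<otimes>\<^bsub>G\<^esub> h) x = act g (act h x))
     \<and> (\<forall>g\<in>carrier G. continuous_on UNIV (act g))"

(* Chart Phi = (l, phi, Z, Gamma, H) for G, where dom(phi) = D.
   Gamma is the type 'c. *)
definition is_chart ::
  "('g, 'm) monoid_scheme \<Rightarrow> nat \<Rightarrow> (('c::{finite, ab_group_add}) zvec \<Rightarrow> 'g) \<Rightarrow> 'c zvec set
     \<Rightarrow> 'c zvec set \<Rightarrow> 'g set set \<Rightarrow> bool" where
  "is_chart G l \<phi> D Z \<H> \<longleftrightarrow>
     finite \<H>
   \<and> (\<forall>H\<in>\<H>. subgroup H G)
   \<and> (\<forall>H\<in>\<H>. \<forall>K\<in>\<H>. \<exists>g\<in>carrier G. K = (g <#\<^bsub>G\<^esub> H) #>\<^bsub>G\<^esub> inv\<^bsub>G\<^esub> g)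
   \<and> (\<exists>z. centered_rect l z Z \<and> (\<forall>i\<in>{1..l}. 0 < fst z i)
        \<and> (\<exists>d. centered_rect l d D) \<and> Rec l (vscale 3 z) \<subseteq> D)
   \<and> inj_on \<phi> D \<and> \<phi> ` D \<subseteq> carrier G
   \<and> \<phi> vzero = \<one>\<^bsub>G\<^esub>
   \<and> (\<forall>r\<in>D. \<forall>s\<in>D. \<forall>H\<in>\<H>.
        (\<phi> r <#\<^bsub>G\<^esub> H = \<phi> s <#\<^bsub>G\<^esub> H \<longrightarrow> r = s)
      \<and> (vtrans (vadd r s) Z \<subseteq> D \<longrightarrow>
           (\<exists>z\<in>Z. (\<phi> r \<otimes>\<^bsub>G\<^esub> \<phi> s) <#\<^bsub>G\<^esub> H = \<phi> (vadd (vadd r s) z) <#\<^bsub>G\<^esub> H))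
      \<and> (vtrans (vadd r (vneg s)) Z \<subseteq> D \<longrightarrow>
           (\<exists>z\<in>Z. (\<phi> r \<otimes>\<^bsub>G\<^esub> inv\<^bsub>G\<^esub> \<phi> s) <#\<^bsub>G\<^esub> H
                   = \<phi> (vadd (vadd r (vneg s)) z) <#\<^bsub>G\<^esub> H))
      \<and> (vtrans (vadd (vneg r) s) Z \<subseteq> D \<longrightarrow>
           (\<exists>z\<in>Z. (inv\<^bsub>G\<^esub> \<phi> r \<otimes>\<^bsub>G\<^esub> \<phi> s) <#\<^bsub>G\<^esub> H
                   = \<phi> (vadd (vadd (vneg r) s) z) <#\<^bsub>G\<^esub> H))
      \<and> (vtrans (vneg s) Z \<subseteq> D \<longrightarrow>
           (\<exists>z\<in>Z. (inv\<^bsub>G\<^esub> \<phi> s) <#\<^bsub>G\<^esub> H = \<phi> (vadd (vneg s) z) <#\<^bsub>G\<^esub> H)))"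

definition act_img :: "('g \<Rightarrow> 'x \<Rightarrow> 'x) \<Rightarrow> ('c zvec \<Rightarrow> 'g) \<Rightarrow> 'c zvec set \<Rightarrow> 'x \<Rightarrow> 'x set" where
  "act_img act \<phi> S x = {act (\<phi> s) x | s. s \<in> S}"

definition boundary ::
  "('g, 'm) monoid_scheme \<Rightarrow> ('g \<Rightarrow> 'x \<Rightarrow> 'x) \<Rightarrow> nat \<Rightarrow> (('c::ab_group_add) zvec \<Rightarrow> 'g)
     \<Rightarrow> 'g set set \<Rightarrow> ('x \<times> 'x) set \<Rightarrow> 'c zvec \<Rightarrow> nat \<Rightarrow> 'x set" where
  "boundary G act l \<phi> \<H> E a i =
     {x \<in> XH G act \<H>.
        E `` act_img act \<phi> (vtrans (vneg (vscale (fst a i) (unitv i))) (rect_face l a i)) x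
      \<inter> E `` act_img act \<phi> (vtrans (vscale (fst a i) (unitv i)) (rect_face l a i)) x = {}}"

definition G_clopen :: "('g, 'm) monoid_scheme \<Rightarrow> ('g \<Rightarrow> 'x::topological_space \<Rightarrow> 'x) \<Rightarrow> ('x \<times> 'x) set \<Rightarrow> bool" where
  "G_clopen G act R \<longleftrightarrow> (\<forall>g\<in>carrier G. open {x. (x, act g x) \<in> R} \<and> closed {x. (x, act g x) \<in> R})"

end

theory Submission
  imports Defs
begin

lemma finite_Rec: "finite (Rec l (b::('c::{finite,ab_group_add}) zvec))"
proof -
  define B where "B = (\<Union>j\<in>{1..l}. {- \<bar>fst b j\<bar>..\<bar>fst b j\<bar>}) \<union> {0::int}"
  define F where "F = (\<lambda>(xs::int list, c::'c). ((\<lambda>j. if 1 \<le> j \<and> j \<le> l then xs!(j-1) else 0), c))"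
  have fB: "finite B" unfolding B_def by auto
  have "Rec l b \<subseteq> F ` ({xs. set xs \<subseteq> B \<and> length xs = l} \<times> UNIV)"
  proof
    fix v assume v: "v \<in> Rec l b"
    let ?xs = "map (fst v) [1..<l+1]"
    have "set ?xs \<subseteq> B"
    proof
      fix y assume "y \<in> set ?xs"
      moreover have "set ?xs = fst v ` {1..<l+1}" by (simp only: set_map set_upt)
      ultimately obtain j where j0: "j \<in> {1..<l+1}" "y = fst v j" by blast
      then have j: "j \<in> {1..l}" "y = fst v j" by auto
      then have "- \<bar>fst b j\<bar> \<le> y \<and> y \<le> \<bar>fst b j\<bar>" using v unfolding Rec_def by auto
      then show "y \<in> B" unfolding B_def using j(1) by auto
    qed
    moreover have "F (?xs, snd v) = v"
    proof -
      have fe: "fst v j = (if 1 \<le> j \<and> j \<le> l then ?xs!(j-1) else 0)" for j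
      proof (cases "1 \<le> j \<and> j \<le> l")
        case True
        then have "j - 1 < l" by linarith
        then have "j - 1 < length [1..<l+1]" by simp
        then have "?xs!(j-1) = fst v ([1..<l+1] ! (j - 1))" by (rule nth_map)
        also have "[1..<l+1] ! (j - 1) = j" using True by (subst nth_upt) auto
        finally have "?xs!(j-1) = fst v j" .
        then show ?thesis using True by simp
      next
        case False
        then have "j < 1 \<or> l < j" by auto
        then show ?thesis using v False unfolding Rec_def Zsp_def by auto
      qed
      have fe2: "(\<lambda>j. if 1 \<le> j \<and> j \<le> l then ?xs!(j-1) else 0) = fst v"
        by (rule ext) (rule fe[symmetric])
      have "F (?xs, snd v) = ((\<lambda>j. if 1 \<le> j \<and> j \<le> l then ?xs!(j-1) else 0), snd v)"
        unfolding F_def by (simp only: case_prod_conv)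
      also have "\<dots> = (fst v, snd v)" by (simp only: fe2)
      finally show ?thesis by simp
    qed
    moreover have "length ?xs = l" by simp
    ultimately show "v \<in> F ` ({xs. set xs \<subseteq> B \<and> length xs = l} \<times> UNIV)"
      by (intro image_eqI[where x="(?xs, snd v)"]) auto
  qed
  moreover have "finite ({xs. set xs \<subseteq> B \<and> length xs = l} \<times> (UNIV::'c set))"
    using finite_lists_length_eq[OF fB] by auto
  ultimately show ?thesis by (meson finite_imageI finite_subset)
qed

lemma shift_sub:
  assumes "centered_rect l a A" "1 \<le> i" "i \<le> l" "k = fst a i \<or> k = - fst a i"
  shows "vtrans (vscale k (unitv i)) (rect_face l a i) \<subseteq> A"
proof
  fix v assume "v \<in> vtrans (vscale k (unitv i)) (rect_face l a i)"
  then obtain b where b: "b \<in> Rec l (vadd a (vneg (vscale (fst a i) (unitv i))))"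
    and v: "v = vadd (vscale k (unitv i)) b"
    unfolding vtrans_def rect_face_def by auto
  have a: "a \<in> Zsp l" "\<forall>j. 0 \<le> fst a j" "A = Rec l a"
    using assms(1) unfolding centered_rect_def by auto
  have bZ: "b \<in> Zsp l" and bb: "\<forall>j\<in>{1..l}. - \<bar>fst a j - (if j = i then fst a i else 0)\<bar> \<le> fst b j
      \<and> fst b j \<le> \<bar>fst a j - (if j = i then fst a i else 0)\<bar>"
    using b unfolding Rec_def vadd_def vneg_def vscale_def unitv_def by auto
  have "v \<in> Zsp l" using bZ assms(2,3) unfolding v Zsp_def vadd_def vscale_def unitv_def by auto
  moreover have "\<forall>j\<in>{1..l}. - \<bar>fst a j\<bar> \<le> fst v j \<and> fst v j \<le> \<bar>fst a j\<bar>"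
  proof
    fix j assume j: "j \<in> {1..l}"
    show "- \<bar>fst a j\<bar> \<le> fst v j \<and> fst v j \<le> \<bar>fst a j\<bar>"
      using bb[rule_format, OF j] assms(4)
      unfolding v vadd_def vscale_def unitv_def by (cases "j = i") auto
  qed
  ultimately show "v \<in> A" unfolding a(3) Rec_def by auto
qed

lemma pair_clopen:
  assumes ca: "continuous_action G act" and gc: "G_clopen G act E"
    and g: "g \<in> carrier G" and h: "h \<in> carrier G"
  shows "open {x. (act g x, act h x) \<in> E} \<and> closed {x. (act g x, act h x) \<in> E}"
proof -
  have grp: "group G" using ca unfolding continuous_action_def by auto
  have hg: "h \<otimes>\<^bsub>G\<^esub> inv\<^bsub>G\<^esub> g \<in> carrier G" using grp g h by (simp add: group.subgroup_self subgroup.m_closed group.inv_closed)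
  have eq: "act (h \<otimes>\<^bsub>G\<^esub> inv\<^bsub>G\<^esub> g) (act g x) = act h x" for x
  proof -
    have "act (h \<otimes>\<^bsub>G\<^esub> inv\<^bsub>G\<^esub> g) (act g x) = act ((h \<otimes>\<^bsub>G\<^esub> inv\<^bsub>G\<^esub> g) \<otimes>\<^bsub>G\<^esub> g) x"
      using ca hg g unfolding continuous_action_def by metis
    also have "(h \<otimes>\<^bsub>G\<^esub> inv\<^bsub>G\<^esub> g) \<otimes>\<^bsub>G\<^esub> g = h"
      using grp g h by (simp add: group.inv_closed monoid.m_assoc group.is_monoid group.l_inv monoid.r_one)
    finally show ?thesis .
  qed
  have set: "{x. (act g x, act h x) \<in> E} = act g -` {y. (y, act (h \<otimes>\<^bsub>G\<^esub> inv\<^bsub>G\<^esub> g) y) \<in> E}"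
    using eq by auto
  have c: "continuous_on UNIV (act g)" using ca g unfolding continuous_action_def by auto
  have "open {y. (y, act (h \<otimes>\<^bsub>G\<^esub> inv\<^bsub>G\<^esub> g) y) \<in> E}" "closed {y. (y, act (h \<otimes>\<^bsub>G\<^esub> inv\<^bsub>G\<^esub> g) y) \<in> E}"
    using gc hg unfolding G_clopen_def by auto
  then show ?thesis unfolding set using c open_vimage closed_vimage by blast
qed

lemma sat_disj:
  assumes "equiv UNIV E"
  shows "(E `` P \<inter> E `` Q = {}) \<longleftrightarrow> (\<forall>p\<in>P. \<forall>q\<in>Q. (p,q) \<notin> E)"
proof -
  have r: "refl E" and sy: "sym E" and tr: "trans E" using assms unfolding equiv_def by auto
  show ?thesis
  proof
    assume h: "E `` P \<inter> E `` Q = {}"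
    show "\<forall>p\<in>P. \<forall>q\<in>Q. (p,q) \<notin> E"
    proof (intro ballI notI)
      fix p q assume "p \<in> P" "q \<in> Q" "(p,q) \<in> E"
      moreover have "(q,q) \<in> E" using r by (simp add: refl_on_def)
      ultimately have "q \<in> E `` P \<inter> E `` Q" by auto
      then show False using h by auto
    qed
  next
    assume h: "\<forall>p\<in>P. \<forall>q\<in>Q. (p,q) \<notin> E"
    show "E `` P \<inter> E `` Q = {}"
    proof (rule ccontr)
      assume "E `` P \<inter> E `` Q \<noteq> {}"
      then obtain y p q where "p \<in> P" "q \<in> Q" "(p,y) \<in> E" "(q,y) \<in> E" by auto
      moreover then have "(y,q) \<in> E" using sy by (meson symD)
      ultimately have "(p,q) \<in> E" using tr by (meson transD)
      then show False using h \<open>p \<in> P\<close> \<open>q \<in> Q\<close> by auto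
    qed
  qed
qed

theorem lemma6p2:
  fixes G :: "('g, 'm) monoid_scheme"
    and act :: "'g \<Rightarrow> 'x::polish_space \<Rightarrow> 'x"
    and l :: nat
    and \<phi> :: "('c::{finite, ab_group_add}) zvec \<Rightarrow> 'g"
    and D Z :: "'c zvec set"
    and \<H> :: "'g set set"
    and E :: "('x \<times> 'x) set"
    and A :: "'c zvec set" and a :: "'c zvec" and i :: nat
  assumes "countable (carrier G)"
    and "continuous_action G act"
    and "is_chart G l \<phi> D Z \<H>"
    and "equiv UNIV E"
    and "open (XH G act \<H>)" and "closed (XH G act \<H>)"
    and "G_clopen G act E"
    and "centered_rect l a A" and "A \<subseteq> D"
    and "1 \<le> i" and "i \<le> l"
  shows "open (boundary G act l \<phi> \<H> E a i) \<and> closed (boundary G act l \<phi> \<H> E a i)"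
proof -
  define S1 where "S1 = vtrans (vneg (vscale (fst a i) (unitv i))) (rect_face l a i)"
  define S2 where "S2 = vtrans (vscale (fst a i) (unitv i)) (rect_face l a i)"
  have nv: "vneg (vscale (fst a i) (unitv i)) = (vscale (- fst a i) (unitv i) :: 'c zvec)"
    unfolding vneg_def vscale_def unitv_def by auto
  have s1: "S1 \<subseteq> A" unfolding S1_def nv using shift_sub[OF assms(8,10,11)] by auto
  have s2: "S2 \<subseteq> A" unfolding S2_def using shift_sub[OF assms(8,10,11)] by auto
  have f1: "finite S1" unfolding S1_def vtrans_def rect_face_def by (intro finite_imageI finite_Rec)
  have f2: "finite S2" unfolding S2_def vtrans_def rect_face_def by (intro finite_imageI finite_Rec)
  have phiC: "\<phi> ` D \<subseteq> carrier G" using assms(3) unfolding is_chart_def by (elim conjE) assumption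
  define C where "C = (\<lambda>p. {x. (act (\<phi> (fst p)) x, act (\<phi> (snd p)) x) \<in> E})"
  have Cc: "open (C p) \<and> closed (C p)" if "p \<in> S1 \<times> S2" for p
  proof -
    have "fst p \<in> D" "snd p \<in> D" using that s1 s2 assms(9) by auto
    then have "\<phi> (fst p) \<in> carrier G" "\<phi> (snd p) \<in> carrier G" using phiC by auto
    then show ?thesis unfolding C_def by (rule pair_clopen[OF assms(2,7)])
  qed
  have mem: "x \<in> boundary G act l \<phi> \<H> E a i \<longleftrightarrow> x \<in> XH G act \<H> \<inter> (\<Inter>p\<in>S1 \<times> S2. - C p)" for x
  proof -
    have "x \<in> boundary G act l \<phi> \<H> E a i \<longleftrightarrow> x \<in> XH G act \<H> \<and>
        (E `` act_img act \<phi> S1 x \<inter> E `` act_img act \<phi> S2 x = {})"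
      unfolding boundary_def S1_def S2_def by simp
    also have "\<dots> \<longleftrightarrow> x \<in> XH G act \<H> \<and> (\<forall>s\<in>S1. \<forall>t\<in>S2. (act (\<phi> s) x, act (\<phi> t) x) \<notin> E)"
      unfolding sat_disj[OF assms(4)] act_img_def by blast
    also have "\<dots> \<longleftrightarrow> x \<in> XH G act \<H> \<inter> (\<Inter>p\<in>S1 \<times> S2. - C p)"
      unfolding C_def by auto
    finally show ?thesis .
  qed
  have beq: "boundary G act l \<phi> \<H> E a i = XH G act \<H> \<inter> (\<Inter>p\<in>S1 \<times> S2. - C p)"
    using mem by blast
  have fin: "finite (S1 \<times> S2)" using f1 f2 by auto
  show ?thesis unfolding beq
  proof
    show "open (XH G act \<H> \<inter> (\<Inter>p\<in>S1 \<times> S2. - C p))"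
      using assms(5) Cc fin by (intro open_Int open_INT) auto
    show "closed (XH G act \<H> \<inter> (\<Inter>p\<in>S1 \<times> S2. - C p))"
      using assms(6) Cc by (intro closed_Int closed_INT) auto
  qed
qed

end
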